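(* There is no SSP group of $G(4,2)$-type. Consequently, if $G$ is a non-abelian SSP group of length $4$ with canonical basis $(a_1,\dots,a_4)$, then $\langle a_1,a_2,a_3\rangle$ is abelian and the cut-off point of $G$ is $3$.
   Context: Notation: $x^f$ is the image of $x$ under $f$; $[x,y]=x^{-1}y^{-1}xy$; $e$ is the identity. A triple $(G,H,f)$, where $H\le G$ and $f:H\to G$ is a homomorphism, is simple if the only subgroup $K\le H$ that is normal in $G$ and satisfies $K^f\le K$ is trivial. For such a triple put $G_0=G$, $H_0=H$, and for $k\ge1$, $G_k=(H_{k-1})^f$, $H_k=H\cap G_k$. Let $p$ be a prime or $\infty$. A polycyclic group $G$ is an SSP group with respect to $(G,H,f)$ if: (1) $f$ is injective; (2) each $(G_k,H_k,f|_{H_k})$ is a simple triple; (3) $H_k$ and $G_{k+1}$ are normal in $G_k$ and $G_k=H_kG_{k+1}$; (4) whenever $G_k$ is nontrivial, $G_k/H_k$ is cyclic of order $p$ (infinite cyclic if $p=\infty$). The length $n$ is the Hirsch length if $p=\infty$ and $\log_p|G|$ if $p$ is prime. A canonical basis of $G$ is a tuple $(a_1,\dots,a_n)$ with $a_1,\dots,a_{n-1}\in H$, $a_{i+1}=a_i^f$ for $1\le i\le n-1$, $G_i=\langle a_{i+1},\dots,a_n\rangle$ and $H_i=\langle a_{i+1},\dots,a_{n-1}\rangle$ for $0\le i\le n-1$. The cut-off point $c$ is the largest $s\in\{2,\dots,n\}$ with $[a_1,a_2]=\dots=[a_1,a_s]=e$; $G$ is then of $G(n,c)$-type. *)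

theory Defs
  imports "HOL-Algebra.Algebra" "HOL-Library.Extended_Nat" "HOL-Computational_Algebra.Primes"
begin

definition commutator :: "('a, 'b) monoid_scheme \<Rightarrow> 'a \<Rightarrow> 'a \<Rightarrow> 'a" where
  "commutator G x y = inv\<^bsub>G\<^esub> x \<otimes>\<^bsub>G\<^esub> inv\<^bsub>G\<^esub> y \<otimes>\<^bsub>G\<^esub> x \<otimes>\<^bsub>G\<^esub> y"

definition polycyclic_series :: "('a, 'b) monoid_scheme \<Rightarrow> nat \<Rightarrow> (nat \<Rightarrow> 'a set) \<Rightarrow> bool" where
  "polycyclic_series G m N \<longleftrightarrow>
     N 0 = carrier G \<and> N m = {\<one>\<^bsub>G\<^esub>} \<and>
     (\<forall>i<m. N (Suc i) \<lhd> G\<lparr>carrier := N i\<rparr> \<and>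
            cyclic_group (G\<lparr>carrier := N i\<rparr> Mod N (Suc i)))"

definition polycyclic :: "('a, 'b) monoid_scheme \<Rightarrow> bool" where
  "polycyclic G \<longleftrightarrow> group G \<and> (\<exists>m N. polycyclic_series G m N)"

(* Hirsch length: number of infinite factors in a polycyclic series (an invariant) *)
definition hirsch_length :: "('a, 'b) monoid_scheme \<Rightarrow> nat" where
  "hirsch_length G = (THE h. \<exists>m N. polycyclic_series G m N \<and>
      h = card {i. i < m \<and> infinite (carrier (G\<lparr>carrier := N i\<rparr> Mod N (Suc i)))})"

definition simple_triple :: "('a, 'b) monoid_scheme \<Rightarrow> 'a set \<Rightarrow> ('a \<Rightarrow> 'a) \<Rightarrow> bool" where
  "simple_triple G H f \<longleftrightarrow>
     (\<forall>K. K \<subseteq> H \<and> K \<lhd> G \<and> f ` K \<subseteq> K \<longrightarrow> K = {\<one>\<^bsub>G\<^esub>})"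

primrec Gseq :: "('a, 'b) monoid_scheme \<Rightarrow> 'a set \<Rightarrow> ('a \<Rightarrow> 'a) \<Rightarrow> nat \<Rightarrow> 'a set" where
  "Gseq G H f 0 = carrier G"
| "Gseq G H f (Suc k) = f ` (H \<inter> Gseq G H f k)"

definition Hseq :: "('a, 'b) monoid_scheme \<Rightarrow> 'a set \<Rightarrow> ('a \<Rightarrow> 'a) \<Rightarrow> nat \<Rightarrow> 'a set" where
  "Hseq G H f k = H \<inter> Gseq G H f k"

definition SSP_group :: "('a, 'b) monoid_scheme \<Rightarrow> 'a set \<Rightarrow> ('a \<Rightarrow> 'a) \<Rightarrow> enat \<Rightarrow> bool" where
  "SSP_group G H f p \<longleftrightarrow>
     (p = \<infinity> \<or> (\<exists>q. p = enat q \<and> Factorial_Ring.prime q)) \<and>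
     group G \<and> polycyclic G \<and> subgroup H G \<and> f \<in> hom (G\<lparr>carrier := H\<rparr>) G \<and>
     inj_on f H \<and>
     (\<forall>k. simple_triple (G\<lparr>carrier := Gseq G H f k\<rparr>) (Hseq G H f k) f) \<and>
     (\<forall>k. Hseq G H f k \<lhd> G\<lparr>carrier := Gseq G H f k\<rparr> \<and>
          Gseq G H f (Suc k) \<lhd> G\<lparr>carrier := Gseq G H f k\<rparr> \<and>
          Gseq G H f k = Hseq G H f k <#>\<^bsub>G\<^esub> Gseq G H f (Suc k)) \<and>
     (\<forall>k. Gseq G H f k \<noteq> {\<one>\<^bsub>G\<^esub>} \<longrightarrow>
          cyclic_group (G\<lparr>carrier := Gseq G H f k\<rparr> Mod Hseq G H f k) \<and>
          (case p of \<infinity> \<Rightarrow> infinite (carrier (G\<lparr>carrier := Gseq G H f k\<rparr> Mod Hseq G H f k))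
                   | enat q \<Rightarrow> order (G\<lparr>carrier := Gseq G H f k\<rparr> Mod Hseq G H f k) = q))"

definition SSP_length :: "('a, 'b) monoid_scheme \<Rightarrow> enat \<Rightarrow> real" where
  "SSP_length G p = (case p of \<infinity> \<Rightarrow> real (hirsch_length G)
                              | enat q \<Rightarrow> log (real q) (real (order G)))"

definition canonical_basis :: "('a, 'b) monoid_scheme \<Rightarrow> 'a set \<Rightarrow> ('a \<Rightarrow> 'a) \<Rightarrow> nat \<Rightarrow> (nat \<Rightarrow> 'a) \<Rightarrow> bool" where
  "canonical_basis G H f n a \<longleftrightarrow>
     (\<forall>i\<in>{1..n}. a i \<in> carrier G) \<and>
     (\<forall>i\<in>{1..n-1}. a i \<in> H) \<and>
     (\<forall>i\<in>{1..n-1}. a (Suc i) = f (a i)) \<and>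
     (\<forall>i\<le>n-1. Gseq G H f i = generate G (a ` {i+1..n}) \<and>
               Hseq G H f i = generate G (a ` {i+1..n-1}))"

definition cutoff_point :: "('a, 'b) monoid_scheme \<Rightarrow> nat \<Rightarrow> (nat \<Rightarrow> 'a) \<Rightarrow> nat \<Rightarrow> bool" where
  "cutoff_point G n a c \<longleftrightarrow>
     (let S = {s\<in>{2..n}. \<forall>j\<in>{2..s}. commutator G (a 1) (a j) = \<one>\<^bsub>G\<^esub>} in
       c \<in> S \<and> (\<forall>s\<in>S. s \<le> c))"

end

theory Submission
  imports Defs
begin


lemma (in group) cancel_l [simp]:
  "x \<in> carrier G \<Longrightarrow> y \<in> carrier G \<Longrightarrow> inv x \<otimes> (x \<otimes> y) = y"
  by (simp add: m_assoc[symmetric])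

lemma (in group) cancel_l2 [simp]:
  "x \<in> carrier G \<Longrightarrow> y \<in> carrier G \<Longrightarrow> x \<otimes> (inv x \<otimes> y) = y"
  by (simp add: m_assoc[symmetric])

lemma (in group) comm_gen:
  assumes y: "y \<in> carrier G" and A: "A \<subseteq> carrier G" and c: "\<forall>x\<in>A. x \<otimes> y = y \<otimes> x"
    and z: "z \<in> generate G A"
  shows "z \<otimes> y = y \<otimes> z"
  using z
proof (induction rule: generate.induct)
  case one then show ?case using y by simp
next
  case (incl h) then show ?case using c by auto
next
  case (inv h)
  then have h: "h \<in> carrier G" "h \<otimes> y = y \<otimes> h" using A c by auto
  have "inv h \<otimes> y = inv h \<otimes> (y \<otimes> h) \<otimes> inv h"
    using h y by (simp add: m_assoc)
  also have "\<dots> = inv h \<otimes> (h \<otimes> y) \<otimes> inv h" using h by simp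
  also have "\<dots> = y \<otimes> inv h" using h(1) y by (simp add: m_assoc)
  finally show ?case .
next
  case (eng h1 h2)
  have c1: "h1 \<in> carrier G" "h2 \<in> carrier G"
    using eng.hyps generate_in_carrier A by blast+
  then show ?case using eng.IH y by (metis m_assoc)
qed

lemma (in group) comm_gen2:
  assumes A: "A \<subseteq> carrier G" and c: "\<forall>x\<in>A. \<forall>y\<in>A. x \<otimes> y = y \<otimes> x"
    and z: "z \<in> generate G A" and w: "w \<in> generate G A"
  shows "z \<otimes> w = w \<otimes> z"
proof -
  have "\<forall>x\<in>A. x \<otimes> z = z \<otimes> x"
    using comm_gen[OF _ A _ z] A c by (metis subsetD)
  moreover have "z \<in> carrier G" using z A generate_in_carrier by blast
  ultimately show ?thesis using comm_gen[OF _ A _ w] by metis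
qed

lemma (in group) powcomm:
  assumes x: "x \<in> carrier G" and y: "y \<in> carrier G" and c: "x \<otimes> y = y \<otimes> x"
  shows "x [^] (i::int) \<otimes> y [^] (j::int) = y [^] j \<otimes> x [^] i"
proof -
  have "x [^] i \<in> generate G {x}" "y [^] j \<in> generate G {y}"
    using generate_pow x y by auto
  have "x \<otimes> y [^] j = y [^] j \<otimes> x"
    using comm_gen[of x "{y}" "y [^] j"] x y c \<open>y [^] j \<in> generate G {y}\<close> by auto
  then show ?thesis
    using comm_gen[of "y [^] j" "{x}" "x [^] i"] x y \<open>x [^] i \<in> generate G {x}\<close> by auto
qed

lemma (in group) gen2_repr:
  assumes x: "x \<in> carrier G" and y: "y \<in> carrier G" and c: "x \<otimes> y = y \<otimes> x"
    and z: "z \<in> generate G {x, y}"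
  shows "\<exists>(i::int) (j::int). z = x [^] i \<otimes> y [^] j"
  using z
proof (induction rule: generate.induct)
  case one
  have "\<one> = x [^] (0::int) \<otimes> y [^] (0::int)" using x y by simp
  then show ?case by blast
next
  case (incl h)
  then show ?case
  proof
    assume "h = x" then show ?thesis by (intro exI[of _ "1::int"] exI[of _ "0::int"]) (simp add: x y)
  next
    assume "h \<in> {y}" then show ?thesis by (intro exI[of _ "0::int"] exI[of _ "1::int"]) (simp add: x y)
  qed
next
  case (inv h)
  then show ?case
  proof
    assume "h = x" then show ?thesis
      by (intro exI[of _ "-1::int"] exI[of _ "0::int"]) (simp add: x y int_pow_neg)
  next
    assume "h \<in> {y}" then show ?thesis
      by (intro exI[of _ "0::int"] exI[of _ "-1::int"]) (simp add: x y int_pow_neg)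
  qed
next
  case (eng h1 h2)
  then obtain i j k l :: int where h: "h1 = x [^] i \<otimes> y [^] j" "h2 = x [^] k \<otimes> y [^] l" by blast
  have "h1 \<otimes> h2 = x [^] i \<otimes> (y [^] j \<otimes> x [^] k) \<otimes> y [^] l"
    using h x y by (simp add: m_assoc)
  also have "\<dots> = x [^] i \<otimes> (x [^] k \<otimes> y [^] j) \<otimes> y [^] l"
    using powcomm[OF x y c] by simp
  also have "\<dots> = x [^] (i + k) \<otimes> y [^] (j + l)"
    using x y by (simp add: m_assoc int_pow_mult)
  finally show ?case by blast
qed

lemma (in group) comm_eq:
  assumes "x \<in> carrier G" "y \<in> carrier G"
  shows "x \<otimes> y = y \<otimes> x \<otimes> commutator G x y"
  using assms by (simp add: commutator_def m_assoc)

lemma (in group) comm_one_iff: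
  assumes "x \<in> carrier G" "y \<in> carrier G"
  shows "commutator G x y = \<one> \<longleftrightarrow> x \<otimes> y = y \<otimes> x"
proof
  assume "commutator G x y = \<one>" then show "x \<otimes> y = y \<otimes> x" using comm_eq[OF assms] assms by simp
next
  assume h: "x \<otimes> y = y \<otimes> x"
  have "commutator G x y = inv x \<otimes> (inv y \<otimes> (x \<otimes> y))"
    using assms by (simp add: commutator_def m_assoc)
  also have "\<dots> = inv x \<otimes> (inv y \<otimes> (y \<otimes> x))" using h by simp
  also have "\<dots> = \<one>" using assms by simp
  finally show "commutator G x y = \<one>" .
qed

lemma (in group) conj_pow:
  assumes g: "g \<in> carrier G" and x: "x \<in> carrier G"
  shows "inv g \<otimes> x [^] (k::int) \<otimes> g = (inv g \<otimes> x \<otimes> g) [^] k"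
proof -
  have "(\<lambda>z. inv g \<otimes> z \<otimes> g) \<in> hom G G"
    by (rule homI) (auto simp: g m_assoc)

  from hom_int_pow[OF this x is_group is_group] show ?thesis by simp
qed

lemma (in group) pow_shift:
  assumes x: "x \<in> carrier G" and g: "g \<in> carrier G" and w: "w \<in> carrier G"
    and r: "x \<otimes> g = g \<otimes> x \<otimes> w" and cw: "x \<otimes> w = w \<otimes> x"
  shows "x [^] (k::int) \<otimes> g = g \<otimes> x [^] k \<otimes> w [^] k"
proof -
  have "inv g \<otimes> x \<otimes> g = x \<otimes> w"
    using r x g w by (simp add: m_assoc)
  then have "inv g \<otimes> x [^] k \<otimes> g = x [^] k \<otimes> w [^] k"
    using conj_pow[OF g x, of k] int_pow_mult_distrib[OF cw x w] by simp
  then have "g \<otimes> (inv g \<otimes> x [^] k \<otimes> g) = g \<otimes> (x [^] k \<otimes> w [^] k)" by simp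
  then show ?thesis using x g w by (simp add: m_assoc[symmetric])
qed

lemma normal_conj:
  assumes grp: "group G" and S: "subgroup S G" and N: "N \<lhd> G\<lparr>carrier := S\<rparr>"
    and x: "x \<in> S" and h: "h \<in> N"
  shows "inv\<^bsub>G\<^esub> x \<otimes>\<^bsub>G\<^esub> h \<otimes>\<^bsub>G\<^esub> x \<in> N"
  using normal.inv_op_closed1[OF N, of x h] x h group.m_inv_consistent[OF grp S x] by simp



lemma (in group) ordB:
  assumes x: "x \<in> carrier G" and o: "ord x = 0 \<or> Factorial_Ring.prime (ord x)"
    and e: "x [^] (n * n :: int) = \<one>"
  shows "x [^] n = \<one>"
proof -
  have d: "int (ord x) dvd n * n" using int_pow_eq_id[OF x] e by simp
  from o show ?thesis
  proof
    assume "ord x = 0" then have "n = 0" using d by simp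
    then show ?thesis by simp
  next
    assume "Factorial_Ring.prime (ord x)"
    then have "Factorial_Ring.prime (int (ord x))" by simp
    then have "int (ord x) dvd n" using d prime_dvd_mult_iff by blast
    then show ?thesis using int_pow_eq_id[OF x] by simp
  qed
qed

lemma (in group) coset_finite:
  assumes N: "subgroup N G" and x: "x \<in> carrier G" and s: "s > 0" and xs: "x [^] (s::int) \<in> N"
    and S: "S = N <#> generate G {x}"
  shows "carrier (G\<lparr>carrier := S\<rparr> Mod N) \<subseteq> (\<lambda>k. N #> x [^] k) ` {0..<s}"
proof
  fix C assume "C \<in> carrier (G\<lparr>carrier := S\<rparr> Mod N)"
  then obtain g where g: "g \<in> S" and X: "C = N #> g"
    unfolding carrier_FactGroup by (auto simp: r_coset_def)
  from g S obtain h k where h: "h \<in> N" and k: "k \<in> generate G {x}" and gk: "g = h \<otimes> k"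
    unfolding set_mult_def by auto
  from k obtain t :: int where t: "k = x [^] t" using generate_pow[OF x] by auto
  have Nc: "N \<subseteq> carrier G" using N subgroup.subset by blast
  have hc: "h \<in> carrier G" using h Nc by auto
  have "t = s * (t div s) + t mod s" by simp
  then have "x [^] t = x [^] (s * (t div s)) \<otimes> x [^] (t mod s)"
    by (metis int_pow_mult x)
  also have "\<dots> = (x [^] s) [^] (t div s) \<otimes> x [^] (t mod s)"
    by (simp add: int_pow_pow x)
  finally have xt: "x [^] t = (x [^] s) [^] (t div s) \<otimes> x [^] (t mod s)" .
  define n where "n = h \<otimes> (x [^] s) [^] (t div s)"
  have nN: "n \<in> N" unfolding n_def
    using h xs subgroup_int_pow_closed[OF N xs] subgroup.m_closed[OF N] by blast
  have g2: "g = n \<otimes> x [^] (t mod s)"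
    unfolding gk t xt n_def using hc x by (simp add: m_assoc)
  have "N #> g = (N #> n) #> x [^] (t mod s)"
    using g2 coset_mult_assoc[OF Nc, of n "x [^] (t mod s)"] nN Nc x by auto
  also have "\<dots> = N #> x [^] (t mod s)"
    using coset_join2[of n N] nN Nc N by auto
  finally have "C = N #> x [^] (t mod s)" using X by simp
  moreover have "t mod s \<in> {0..<s}" using s by simp
  ultimately show "C \<in> (\<lambda>k. N #> x [^] k) ` {0..<s}" by blast
qed

lemma (in group) ordA:
  assumes N: "subgroup N G" and x: "x \<in> carrier G"
    and S: "S = N <#> generate G {x}"
    and o: "(ord x = 0 \<and> infinite (carrier (G\<lparr>carrier := S\<rparr> Mod N))) \<or>
            (Factorial_Ring.prime (ord x) \<and> order (G\<lparr>carrier := S\<rparr> Mod N) = ord x)"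
    and r: "x [^] (r::int) \<in> N"
  shows "x [^] r = \<one>"
proof (rule ccontr)
  assume ne: "x [^] r \<noteq> \<one>"
  have rn0: "r \<noteq> 0" using ne by auto
  have xa: "x [^] \<bar>r\<bar> \<in> N"
  proof (cases "r \<ge> 0")
    case True then show ?thesis using r by simp
  next
    case False
    then have "x [^] \<bar>r\<bar> = inv (x [^] r)"
      using x by (simp add: int_pow_neg[symmetric])
    then show ?thesis using r subgroup.m_inv_closed[OF N] by simp
  qed
  from o show False
  proof
    assume o1: "ord x = 0 \<and> infinite (carrier (G\<lparr>carrier := S\<rparr> Mod N))"
    have "carrier (G\<lparr>carrier := S\<rparr> Mod N) \<subseteq> (\<lambda>k. N #> x [^] k) ` {0..<\<bar>r\<bar>}"
      using coset_finite[OF N x _ xa S] rn0 by simp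
    then have "finite (carrier (G\<lparr>carrier := S\<rparr> Mod N))"
      by (rule finite_subset) simp
    then show False using o1 by simp
  next
    assume o2: "Factorial_Ring.prime (ord x) \<and> order (G\<lparr>carrier := S\<rparr> Mod N) = ord x"
    then have pq: "Factorial_Ring.prime (int (ord x))" by simp
    have nd: "\<not> int (ord x) dvd r" using ne int_pow_eq_id[OF x] by simp
    then have "coprime (int (ord x)) r" using pq prime_imp_coprime by blast
    then have "gcd r (int (ord x)) = 1" by (simp add: coprime_iff_gcd_eq_1 gcd.commute)
    then obtain u v where uv: "u * r + v * int (ord x) = 1" using bezout_int[of r "int (ord x)"] by auto
    have xo: "x [^] (int (ord x)) = \<one>" using int_pow_eq_id[OF x] by simp
    have "x [^] (1::int) = x [^] (r * u) \<otimes> x [^] (int (ord x) * v)"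
      using uv by (metis int_pow_mult mult.commute x)
    also have "\<dots> = (x [^] r) [^] u" using x xo by (simp add: int_pow_pow[symmetric])
    finally have "x [^] (1::int) \<in> N" using subgroup_int_pow_closed[OF N r] by simp
    then have "carrier (G\<lparr>carrier := S\<rparr> Mod N) \<subseteq> (\<lambda>k. N #> x [^] k) ` {0..<(1::int)}"
      using coset_finite[OF N x _ _ S, of 1] by simp
    then have "card (carrier (G\<lparr>carrier := S\<rparr> Mod N)) \<le> card ((\<lambda>k. N #> x [^] k) ` {0..<(1::int)})"
      by (intro card_mono) auto
    also have "\<dots> \<le> card {0..<(1::int)}" by (rule card_image_le) simp
    also have "\<dots> = 1" by simp
    finally have "card (carrier (G\<lparr>carrier := S\<rparr> Mod N)) \<le> 1" .
    moreover have "ord x \<ge> 2" using o2 prime_ge_2_nat by blast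
    ultimately show False using o2 unfolding order_def by simp
  qed
qed



lemma (in group) ctx:
  assumes "l = r" "P \<in> carrier G" "Q \<in> carrier G"
  shows "P \<otimes> l \<otimes> Q = P \<otimes> r \<otimes> Q"
  using assms by simp

lemma (in group) core:
  fixes H :: "'a set" and f :: "'a \<Rightarrow> 'a"
    and p :: enat and a :: "nat \<Rightarrow> 'a"
  assumes "SSP_group G H f p"
    and "canonical_basis G H f 4 a"
  shows "\<not> cutoff_point G 4 a 2 \<and>
         (\<not> comm_group G \<longrightarrow>
            comm_group (subgroup_generated G {a 1, a 2, a 3}) \<and> cutoff_point G 4 a 3)"
proof -
  have grp: "group G" and sub: "subgroup H G" and hom: "f \<in> hom (G\<lparr>carrier := H\<rparr>) G"
    and inj: "inj_on f H"
    and nrm: "\<And>k. Hseq G H f k \<lhd> G\<lparr>carrier := Gseq G H f k\<rparr> \<and>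
          Gseq G H f (Suc k) \<lhd> G\<lparr>carrier := Gseq G H f k\<rparr> \<and>
          Gseq G H f k = Hseq G H f k <#>\<^bsub>G\<^esub> Gseq G H f (Suc k)"
    and ordc: "\<And>k. Gseq G H f k \<noteq> {\<one>\<^bsub>G\<^esub>} \<Longrightarrow>
          (case p of \<infinity> \<Rightarrow> infinite (carrier (G\<lparr>carrier := Gseq G H f k\<rparr> Mod Hseq G H f k))
                   | enat q \<Rightarrow> order (G\<lparr>carrier := Gseq G H f k\<rparr> Mod Hseq G H f k) = q)"
    and pp: "p = \<infinity> \<or> (\<exists>q. p = enat q \<and> Factorial_Ring.prime q)"
    using assms(1) unfolding SSP_group_def by blast+
  have cb1: "\<And>i. i \<in> {1..4} \<Longrightarrow> a i \<in> carrier G"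
    and cb2: "\<And>i. i \<in> {1..3} \<Longrightarrow> a i \<in> H"
    and cb3: "\<And>i. i \<in> {1..3} \<Longrightarrow> a (Suc i) = f (a i)"
    and cb4: "\<And>i. i \<le> 3 \<Longrightarrow> Gseq G H f i = generate G (a ` {i+1..4}) \<and>
               Hseq G H f i = generate G (a ` {i+1..3})"
    using assms(2) unfolding canonical_basis_def by auto
  have a1: "a 1 \<in> carrier G" and a2: "a 2 \<in> carrier G" and a3: "a 3 \<in> carrier G"
    and a4: "a 4 \<in> carrier G" using cb1 by auto
  have a1H: "a 1 \<in> H" and a2H: "a 2 \<in> H" and a3H: "a 3 \<in> H" using cb2 by auto
  have f1: "f (a 1) = a 2" using cb3[of 1] by (simp add: numeral_2_eq_2)
  have f2: "f (a 2) = a 3" using cb3[of 2] by (simp add: numeral_3_eq_3 numeral_2_eq_2)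
  have f3: "f (a 3) = a 4" using cb3[of 3] by (simp add: numeral_3_eq_3 eval_nat_numeral)
  have n1: "(0::nat)+1 = 1" "(1::nat)+1 = 2" "(2::nat)+1 = 3" "(3::nat)+1 = 4" by simp_all
  have le3: "(0::nat) \<le> 3" "(1::nat) \<le> 3" "(2::nat) \<le> 3" "(3::nat) \<le> 3" by simp_all
  have s1: "a ` {2..4::nat} = {a 2, a 3, a 4}" "a ` {2..3::nat} = {a 2,a 3}" "a ` {3..4::nat} = {a 3,a 4}"
    "a ` {1..4::nat} = {a 1, a 2, a 3, a 4}" "a ` {1..3::nat} = {a 1, a 2, a 3}"
    "a ` {3..3::nat} = {a 3}" "a ` {4..4::nat} = {a 4}" "a ` {4..3::nat} = {}"
    by (auto simp: eval_nat_numeral atLeastAtMostSuc_conv)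
  have G0: "carrier G = generate G {a 1, a 2, a 3, a 4}"
    and H0: "Hseq G H f 0 = generate G {a 1, a 2, a 3}"
    using cb4[OF le3(1)] unfolding n1 s1 by auto
  have G1: "Gseq G H f 1 = generate G {a 2, a 3, a 4}"
    and H1: "Hseq G H f 1 = generate G {a 2, a 3}"
    using cb4[OF le3(2)] unfolding n1 s1 by blast+
  have G2: "Gseq G H f 2 = generate G {a 3, a 4}"
    and H2: "Hseq G H f 2 = generate G {a 3}"
    using cb4[OF le3(3)] unfolding n1 s1 by blast+
  have G3: "Gseq G H f 3 = generate G {a 4}"
    and H3: "Hseq G H f 3 = {\<one>}"
    using cb4[OF le3(4)] unfolding n1 s1 by (auto simp: generate_empty)
  have gH: "group (G\<lparr>carrier := H\<rparr>)" using subgroup.subgroup_is_group[OF sub is_group] .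
  have fgh: "group_hom (G\<lparr>carrier := H\<rparr>) G f"
    unfolding group_hom_def group_hom_axioms_def using gH is_group hom by simp
  have Hc: "H \<subseteq> carrier G" using sub subgroup.subset by blast
  have fmul: "\<And>x y. x \<in> H \<Longrightarrow> y \<in> H \<Longrightarrow> f (x \<otimes> y) = f x \<otimes> f y"
    using group_hom.hom_mult[OF fgh] by simp
  have finv: "\<And>x. x \<in> H \<Longrightarrow> f (inv x) = inv (f x)"
    using group_hom.hom_inv[OF fgh] m_inv_consistent[OF sub] by simp
  have fpow: "\<And>x (k::int). x \<in> H \<Longrightarrow> f (x [^] k) = f x [^] k"
    using group_hom.hom_int_pow[OF fgh] int_pow_consistent[OF sub] by simp
  have fone: "f \<one> = \<one>"
    using group_hom.hom_one[OF fgh] by simp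
  have fker: "\<And>x. x \<in> H \<Longrightarrow> f x = \<one> \<Longrightarrow> x = \<one>"
    using inj fone subgroup.one_closed[OF sub] by (metis inj_onD)
  have fcomm: "\<And>x y. x \<in> H \<Longrightarrow> y \<in> H \<Longrightarrow> f (commutator G x y) = commutator G (f x) (f y)"
    unfolding commutator_def using sub
    by (simp add: fmul finv subgroup.m_closed subgroup.m_inv_closed)
  have commH: "\<And>x y. x \<in> H \<Longrightarrow> y \<in> H \<Longrightarrow> commutator G x y \<in> H"
    unfolding commutator_def using sub by (simp add: subgroup.m_closed subgroup.m_inv_closed)
  have HpowH: "\<And>x (k::int). x \<in> H \<Longrightarrow> x [^] k \<in> H" using subgroup_int_pow_closed[OF sub] by blast
  have sg1: "subgroup (Gseq G H f 1) G" "subgroup (Hseq G H f 1) G"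
     "subgroup (Gseq G H f 2) G" "subgroup (Hseq G H f 2) G" "subgroup (Gseq G H f 3) G"
    unfolding G1 H1 G2 H2 G3 using a1 a2 a3 a4 by (auto intro!: generate_is_subgroup)
  have inG1: "a 2 \<in> Gseq G H f 1" "a 3 \<in> Gseq G H f 1" "a 4 \<in> Gseq G H f 1"
    unfolding G1 by (auto intro: generate.incl)
  have inH1: "a 2 \<in> Hseq G H f 1" "a 3 \<in> Hseq G H f 1"
    unfolding H1 by (auto intro: generate.incl)
  have inG2: "a 3 \<in> Gseq G H f 2" "a 4 \<in> Gseq G H f 2"
    unfolding G2 by (auto intro: generate.incl)
  have inH2: "a 3 \<in> Hseq G H f 2" unfolding H2 by (auto intro: generate.incl)
  have Hseq_sub: "\<And>k. Hseq G H f k \<subseteq> H" unfolding Hseq_def by blast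
  have ordfacts: "a 4 \<noteq> \<one> \<Longrightarrow>
     (ord (a 4) = 0 \<or> Factorial_Ring.prime (ord (a 4))) \<and>
     (\<forall>r::int. a 4 [^] r \<in> Hseq G H f 2 \<longrightarrow> a 4 [^] r = \<one>)"
  proof -
    assume ne: "a 4 \<noteq> \<one>"
    have n3: "Gseq G H f 3 \<noteq> {\<one>}" using ne unfolding G3 by (auto intro: generate.incl)
    have n2: "Gseq G H f 2 \<noteq> {\<one>}" using ne inG2 by auto
    have car3: "carrier (G\<lparr>carrier := Gseq G H f 3\<rparr> Mod Hseq G H f 3) = (\<lambda>g. {g}) ` generate G {a 4}"
      unfolding carrier_FactGroup H3 G3 r_coset_def
      using generate_in_carrier[of "{a 4}"] a4 by (auto intro!: image_cong)
    have cardeq: "card (carrier (G\<lparr>carrier := Gseq G H f 3\<rparr> Mod Hseq G H f 3)) = ord (a 4)"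
      unfolding car3 generate_pow_card[OF a4] by (simp add: card_image)
    have infeq: "infinite (carrier (G\<lparr>carrier := Gseq G H f 3\<rparr> Mod Hseq G H f 3)) \<longleftrightarrow> infinite (generate G {a 4})"
      unfolding car3 by (simp add: finite_image_iff)
    have S2: "Gseq G H f 2 = Hseq G H f 2 <#> generate G {a 4}"
      using nrm[of 2] G3 by (simp add: numeral_3_eq_3 eval_nat_numeral)
    have o: "(ord (a 4) = 0 \<and> infinite (carrier (G\<lparr>carrier := Gseq G H f 2\<rparr> Mod Hseq G H f 2))) \<or>
            (Factorial_Ring.prime (ord (a 4)) \<and> order (G\<lparr>carrier := Gseq G H f 2\<rparr> Mod Hseq G H f 2) = ord (a 4))"
      using pp
    proof
      assume pinf: "p = \<infinity>"
      have "infinite (generate G {a 4})" using ordc[OF n3] pinf infeq by simp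
      then have "ord (a 4) = 0" using generate_pow_card[OF a4] by simp
      then show ?thesis using ordc[OF n2] pinf by simp
    next
      assume "\<exists>q. p = enat q \<and> Factorial_Ring.prime q"
      then obtain q where pq: "p = enat q" "Factorial_Ring.prime q" by blast
      have "ord (a 4) = q" using ordc[OF n3] pq cardeq unfolding order_def by simp
      then show ?thesis using ordc[OF n2] pq by simp
    qed
    show ?thesis
    proof
      show "ord (a 4) = 0 \<or> Factorial_Ring.prime (ord (a 4))" using o by blast
      show "\<forall>r::int. a 4 [^] r \<in> Hseq G H f 2 \<longrightarrow> a 4 [^] r = \<one>"
        using ordA[OF sg1(4) a4 S2 o] by blast
    qed
  qed
  have eqS0: "Gseq G H f (Suc 0) = Gseq G H f 1" by simp
  have eqS2: "Gseq G H f (Suc 2) = Gseq G H f 3" by (simp add: eval_nat_numeral)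
  have nG0: "Gseq G H f 1 \<lhd> G\<lparr>carrier := carrier G\<rparr>"
    using conjunct1[OF conjunct2[OF nrm[of 0]]] unfolding eqS0 by simp
  have nH0: "Hseq G H f 0 \<lhd> G\<lparr>carrier := carrier G\<rparr>"
    using conjunct1[OF nrm[of 0]] by simp
  have nH1: "Hseq G H f 1 \<lhd> G\<lparr>carrier := Gseq G H f 1\<rparr>"
    using conjunct1[OF nrm[of 1]] by simp
  have nH2: "Hseq G H f 2 \<lhd> G\<lparr>carrier := Gseq G H f 2\<rparr>"
    using conjunct1[OF nrm[of 2]] by simp
  have nG2: "Gseq G H f 3 \<lhd> G\<lparr>carrier := Gseq G H f 2\<rparr>"
    using conjunct1[OF conjunct2[OF nrm[of 2]]] unfolding eqS2 by simp
  have sgc: "subgroup (carrier G) G" by (rule subgroup_self)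
  have main: "a 1 \<otimes> a 2 = a 2 \<otimes> a 1 \<and> a 1 \<otimes> a 3 = a 3 \<otimes> a 1 \<and> a 2 \<otimes> a 3 = a 3 \<otimes> a 2 \<and>
     a 2 \<otimes> a 4 = a 4 \<otimes> a 2 \<and> a 3 \<otimes> a 4 = a 4 \<otimes> a 3"
  proof (cases "a 4 = \<one>")
    case True
    have "a 3 = \<one>" using fker[OF a3H] f3 True by simp
    moreover then have "a 2 = \<one>" using fker[OF a2H] f2 by simp
    moreover then have "a 1 = \<one>" using fker[OF a1H] f1 by simp
    ultimately show ?thesis using True by simp
  next
    case False
    note of = ordfacts[OF False]
    have A: "\<And>r::int. a 4 [^] r \<in> Hseq G H f 2 \<Longrightarrow> a 4 [^] r = \<one>" using of by blast
    have B: "\<And>n::int. a 4 [^] (n * n) = \<one> \<Longrightarrow> a 4 [^] n = \<one>"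
      using ordB[OF a4] of by blast
    have k1: "commutator G (a 3) (a 4) = inv (a 3) \<otimes> (inv (a 4) \<otimes> a 3 \<otimes> a 4)"
      unfolding commutator_def using a3 a4 by (simp add: m_assoc)
    have "inv (a 4) \<otimes> a 3 \<otimes> a 4 \<in> Hseq G H f 2"
      using normal_conj[OF is_group sg1(3) nH2 inG2(2) inH2] by simp
    then have k2: "commutator G (a 3) (a 4) \<in> Hseq G H f 2"
      unfolding k1 using inH2 sg1(4) subgroup.m_closed subgroup.m_inv_closed by metis
    have "inv (a 3) \<otimes> inv (a 4) \<otimes> a 3 \<in> Gseq G H f 3"
      using normal_conj[OF is_group sg1(3) nG2 inG2(1), of "inv (a 4)"] sg1(5)
      unfolding G3 using a4 by (simp add: generate.inv)
    moreover have "a 4 \<in> Gseq G H f 3" unfolding G3 by (auto intro: generate.incl)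
    ultimately have k3: "commutator G (a 3) (a 4) \<in> Gseq G H f 3"
      unfolding commutator_def using subgroup.m_closed[OF sg1(5)] by blast
    then obtain r :: int where "commutator G (a 3) (a 4) = a 4 [^] r"
      unfolding G3 generate_pow[OF a4] by blast
    then have "commutator G (a 3) (a 4) = \<one>" using A k2 by metis
    then have c34: "a 3 \<otimes> a 4 = a 4 \<otimes> a 3" using comm_one_iff a3 a4 by blast
    have "f (commutator G (a 2) (a 3)) = \<one>" using fcomm[OF a2H a3H] f2 f3
      \<open>commutator G (a 3) (a 4) = \<one>\<close> by simp
    then have "commutator G (a 2) (a 3) = \<one>"
      using fker[OF commH[OF a2H a3H]] by blast
    then have c23: "a 2 \<otimes> a 3 = a 3 \<otimes> a 2" using comm_one_iff a2 a3 by blast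
    have "f (commutator G (a 1) (a 2)) = \<one>" using fcomm[OF a1H a2H] f1 f2
      \<open>commutator G (a 2) (a 3) = \<one>\<close> by simp
    then have "commutator G (a 1) (a 2) = \<one>"
      using fker[OF commH[OF a1H a2H]] by blast
    then have c12: "a 1 \<otimes> a 2 = a 2 \<otimes> a 1" using comm_one_iff a1 a2 by blast
    define c where "c = commutator G (a 1) (a 3)"
    have cH: "c \<in> H" unfolding c_def using commH a1H a3H by blast
    have "inv (a 1) \<otimes> inv (a 3) \<otimes> a 1 \<in> Gseq G H f 1"
      using normal_conj[OF is_group sgc nG0 a1, of "inv (a 3)"] inG1(2)
        subgroup.m_inv_closed[OF sg1(1)] by simp
    then have cG1: "c \<in> Gseq G H f 1"
      unfolding c_def commutator_def using inG1(2) subgroup.m_closed[OF sg1(1)] by blast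
    have cH1: "c \<in> generate G {a 2, a 3}" using cH cG1 H1 unfolding Hseq_def by blast
    obtain i j :: int where cij: "c = a 2 [^] i \<otimes> a 3 [^] j"
      using gen2_repr[OF a2 a3 c23 cH1] by blast
    define d where "d = commutator G (a 2) (a 4)"
    have fc: "f c = d" unfolding c_def d_def using fcomm[OF a1H a3H] f1 f3 by simp
    have dij: "d = a 3 [^] i \<otimes> a 4 [^] j"
      using fc cij fmul[OF HpowH[OF a2H] HpowH[OF a3H]] fpow a2H a3H f2 f3 by simp
    have "inv (a 4) \<otimes> a 2 \<otimes> a 4 \<in> Hseq G H f 1"
      using normal_conj[OF is_group sg1(1) nH1 inG1(3) inH1(1)] by simp
    moreover have "d = inv (a 2) \<otimes> (inv (a 4) \<otimes> a 2 \<otimes> a 4)"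
      unfolding d_def commutator_def using a2 a4 by (simp add: m_assoc)
    ultimately have dH1: "d \<in> Hseq G H f 1"
      using subgroup.m_closed[OF sg1(2)] subgroup.m_inv_closed[OF sg1(2) inH1(1)] by simp
    have dG2: "d \<in> Gseq G H f 2"
      unfolding dij using subgroup_int_pow_closed[OF sg1(3) inG2(1)] subgroup_int_pow_closed[OF sg1(3) inG2(2)]
        subgroup.m_closed[OF sg1(3)] by blast
    have dH2: "d \<in> generate G {a 3}"
      using dH1 dG2 H2 Hseq_sub unfolding Hseq_def by blast
    then obtain m :: int where dm: "d = a 3 [^] m" using generate_pow[OF a3] by blast
    have "a 4 [^] j = inv (a 3 [^] i) \<otimes> d" unfolding dij using a3 a4 by simp
    also have "\<dots> \<in> generate G {a 3}"
    proof -
      have "a 3 [^] i \<in> generate G {a 3}" using generate_pow[OF a3] by blast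
      then show ?thesis using dH2 sg1(4) unfolding H2
        using subgroup.m_closed subgroup.m_inv_closed by metis
    qed
    finally have "a 4 [^] j = \<one>" using A H2 by simp
    then have "f (a 3 [^] j) = \<one>" using fpow[OF a3H] f3 by simp
    then have a3j: "a 3 [^] j = \<one>" using fker[OF HpowH[OF a3H]] by blast
    have cu: "c = a 2 [^] i" using cij a3j a2 by simp
    have dv: "d = a 3 [^] i" using fc cu fpow[OF a2H] f2 by simp
    define e where "e = commutator G (a 1) (a 4)"
    have sH0: "subgroup (Hseq G H f 0) G" unfolding H0 using a1 a2 a3 by (auto intro!: generate_is_subgroup)
    have a1H0: "a 1 \<in> Hseq G H f 0" unfolding H0 by (auto intro: generate.incl)
    have "inv (a 4) \<otimes> a 1 \<otimes> a 4 \<in> Hseq G H f 0"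
      using normal_conj[OF is_group sgc nH0 a4 a1H0] by simp
    moreover have "e = inv (a 1) \<otimes> (inv (a 4) \<otimes> a 1 \<otimes> a 4)"
      unfolding e_def commutator_def using a1 a4 by (simp add: m_assoc)
    ultimately have eH0: "e \<in> Hseq G H f 0"
      using subgroup.m_closed[OF sH0] subgroup.m_inv_closed[OF sH0 a1H0] by simp
    have "inv (a 1) \<otimes> inv (a 4) \<otimes> a 1 \<in> Gseq G H f 1"
      using normal_conj[OF is_group sgc nG0 a1, of "inv (a 4)"] inG1(3)
        subgroup.m_inv_closed[OF sg1(1)] by simp
    then have eG1: "e \<in> Gseq G H f 1"
      unfolding e_def commutator_def using inG1(3) subgroup.m_closed[OF sg1(1)] by blast
    have "e \<in> Hseq G H f 1" unfolding Hseq_def using Hseq_sub[of 0] eH0 eG1 by blast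
    then have eH1: "e \<in> generate G {a 2, a 3}" using H1 by simp
    have ec: "e \<in> carrier G" using Hseq_sub[of 0] eH0 Hc by blast
    have e2: "e \<otimes> a 2 = a 2 \<otimes> e" using comm_gen[OF a2 _ _ eH1] a2 a3 c23 by auto
    have e3: "e \<otimes> a 3 = a 3 \<otimes> e" using comm_gen[OF a3 _ _ eH1] a2 a3 c23 by auto
    define u where "u = a 2 [^] i"
    define w where "w = a 3 [^] (i * i)"
    have uc: "u \<in> carrier G" and wc: "w \<in> carrier G" unfolding u_def w_def using a2 a3 by auto
    have ug: "u \<in> generate G {a 2}" unfolding u_def using generate_pow[OF a2] by blast
    have ue: "u \<otimes> e = e \<otimes> u" using comm_gen[OF ec _ _ ug] a2 e2 by auto
    have R1: "a 1 \<otimes> a 3 = a 3 \<otimes> a 1 \<otimes> u"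
      using comm_eq[OF a1 a3] cu unfolding c_def u_def by simp
    have R3: "a 1 \<otimes> a 4 = a 4 \<otimes> a 1 \<otimes> e"
      using comm_eq[OF a1 a4] unfolding e_def by simp
    have R2: "a 2 \<otimes> a 4 = a 4 \<otimes> a 2 \<otimes> a 3 [^] i"
      using comm_eq[OF a2 a4] dv unfolding d_def by simp
    have vg: "a 3 [^] i \<in> generate G {a 3}" using generate_pow[OF a3] by blast
    have cv: "a 2 \<otimes> a 3 [^] i = a 3 [^] i \<otimes> a 2"
      using comm_gen[OF a2 _ _ vg] a3 c23 by auto
    have Rs: "u \<otimes> a 4 = a 4 \<otimes> u \<otimes> w"
      using pow_shift[OF a2 a4 _ R2 cv, of i] a3 unfolding u_def w_def by (simp add: int_pow_pow)
    have L1: "a 1 \<otimes> a 4 \<otimes> a 3 = a 3 \<otimes> a 4 \<otimes> a 1 \<otimes> e \<otimes> u \<otimes> w"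
    proof -
      have "a 1 \<otimes> a 4 \<otimes> a 3 = a 1 \<otimes> (a 3 \<otimes> a 4) \<otimes> \<one>"
        using ctx[OF c34[symmetric] a1 one_closed] a1 a3 a4 by (simp add: m_assoc)
      also have "\<dots> = \<one> \<otimes> (a 3 \<otimes> a 1 \<otimes> u) \<otimes> a 4"
        using ctx[OF R1 one_closed a4] a1 a3 a4 uc by (simp add: m_assoc)
      also have "\<dots> = (a 3 \<otimes> a 1) \<otimes> (a 4 \<otimes> u \<otimes> w) \<otimes> \<one>"
        using ctx[OF Rs, of "a 3 \<otimes> a 1" "\<one>"] a1 a3 a4 uc wc by (simp add: m_assoc)
      also have "\<dots> = a 3 \<otimes> (a 4 \<otimes> a 1 \<otimes> e) \<otimes> (u \<otimes> w)"
        using ctx[OF R3, of "a 3" "u \<otimes> w"] a1 a3 a4 uc wc ec by (simp add: m_assoc)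
      finally show ?thesis using a1 a3 a4 uc wc ec by (simp add: m_assoc)
    qed
    have L2: "a 1 \<otimes> a 4 \<otimes> a 3 = a 3 \<otimes> a 4 \<otimes> a 1 \<otimes> e \<otimes> u"
    proof -
      have "a 1 \<otimes> a 4 \<otimes> a 3 = \<one> \<otimes> (a 4 \<otimes> a 1 \<otimes> e) \<otimes> a 3"
        using ctx[OF R3 one_closed a3] a1 a3 a4 by (simp add: m_assoc)
      also have "\<dots> = (a 4 \<otimes> a 1) \<otimes> (a 3 \<otimes> e) \<otimes> \<one>"
        using ctx[OF e3, of "a 4 \<otimes> a 1" "\<one>"] a1 a3 a4 ec by (simp add: m_assoc)
      also have "\<dots> = a 4 \<otimes> (a 3 \<otimes> a 1 \<otimes> u) \<otimes> e"
        using ctx[OF R1, of "a 4" e] a1 a3 a4 ec uc by (simp add: m_assoc)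
      also have "\<dots> = \<one> \<otimes> (a 3 \<otimes> a 4) \<otimes> (a 1 \<otimes> u \<otimes> e)"
        using ctx[OF c34[symmetric], of "\<one>" "a 1 \<otimes> u \<otimes> e"] a1 a3 a4 ec uc by (simp add: m_assoc)
      also have "\<dots> = (a 3 \<otimes> a 4 \<otimes> a 1) \<otimes> (e \<otimes> u) \<otimes> \<one>"
        using ctx[OF ue, of "a 3 \<otimes> a 4 \<otimes> a 1" "\<one>"] a1 a3 a4 ec uc by (simp add: m_assoc)
      finally show ?thesis using a1 a3 a4 uc ec by (simp add: m_assoc)
    qed
    have "(a 3 \<otimes> a 4 \<otimes> a 1 \<otimes> e \<otimes> u) \<otimes> w = (a 3 \<otimes> a 4 \<otimes> a 1 \<otimes> e \<otimes> u)"
      by (rule trans[OF L1[symmetric] L2])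
    then have w1: "w = \<one>" using a1 a3 a4 uc wc ec by simp
    then have "a 4 [^] (i * i) = \<one>" using fpow[OF a3H, of "i * i"] f3 fone unfolding w_def by simp
    then have "a 4 [^] i = \<one>" using B by blast
    then have "f (a 3 [^] i) = \<one>" using fpow[OF a3H] f3 by simp
    then have "a 3 [^] i = \<one>" using fker[OF HpowH[OF a3H]] by blast
    then have "f (a 2 [^] i) = \<one>" using fpow[OF a2H] f2 by simp
    then have "a 2 [^] i = \<one>" using fker[OF HpowH[OF a2H]] by blast
    then have c1: "c = \<one>" using cu by simp
    then have c13: "a 1 \<otimes> a 3 = a 3 \<otimes> a 1" using comm_one_iff[OF a1 a3] unfolding c_def by blast
    have "d = \<one>" using fc c1 fone by simp
    then have c24: "a 2 \<otimes> a 4 = a 4 \<otimes> a 2" using comm_one_iff[OF a2 a4] unfolding d_def by blast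
    show ?thesis using c12 c13 c23 c24 c34 by blast
  qed
  have k12: "commutator G (a 1) (a 2) = \<one>" and k13: "commutator G (a 1) (a 3) = \<one>"
    using main comm_one_iff a1 a2 a3 by blast+
  have j23: "\<forall>j\<in>{2..3::nat}. commutator G (a 1) (a j) = \<one>"
  proof
    fix j :: nat assume "j \<in> {2..3}"
    then have "j = 2 \<or> j = 3" by auto
    then show "commutator G (a 1) (a j) = \<one>" using k12 k13 by auto
  qed
  have notc2: "\<not> cutoff_point G 4 a 2"
  proof
    assume "cutoff_point G 4 a 2"
    then have "\<forall>s\<in>{s \<in> {2..4::nat}. \<forall>j\<in>{2..s}. commutator G (a 1) (a j) = \<one>}. s \<le> 2"
      unfolding cutoff_point_def Let_def by blast
    moreover have "(3::nat) \<in> {s \<in> {2..4::nat}. \<forall>j\<in>{2..s}. commutator G (a 1) (a j) = \<one>}"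
      using j23 by simp
    ultimately have "(3::nat) \<le> 2" by (rule bspec)
    then show False by simp
  qed
  have part2: "\<not> comm_group G \<Longrightarrow>
     comm_group (subgroup_generated G {a 1, a 2, a 3}) \<and> cutoff_point G 4 a 3"
  proof -
    assume nc: "\<not> comm_group G"
    have n14: "\<not> a 1 \<otimes> a 4 = a 4 \<otimes> a 1"
    proof
      assume h: "a 1 \<otimes> a 4 = a 4 \<otimes> a 1"
      have A: "{a 1, a 2, a 3, a 4} \<subseteq> carrier G" using a1 a2 a3 a4 by auto
      have pc: "\<forall>x\<in>{a 1, a 2, a 3, a 4}. \<forall>y\<in>{a 1, a 2, a 3, a 4}. x \<otimes> y = y \<otimes> x"
        using main h by auto
      have "comm_group G"
        by (rule group_comm_groupI) (use comm_gen2[OF A pc] G0 in blast)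
      then show False using nc by simp
    qed
    have A3: "{a 1, a 2, a 3} \<subseteq> carrier G" using a1 a2 a3 by auto
    have pc3: "\<forall>x\<in>{a 1, a 2, a 3}. \<forall>y\<in>{a 1, a 2, a 3}. x \<otimes> y = y \<otimes> x"
      using main by auto
    have cg: "comm_group (subgroup_generated G {a 1, a 2, a 3})"
    proof (rule group.group_comm_groupI)
      show "group (subgroup_generated G {a 1, a 2, a 3})" by simp
      fix x y assume "x \<in> carrier (subgroup_generated G {a 1, a 2, a 3})"
        "y \<in> carrier (subgroup_generated G {a 1, a 2, a 3})"
      then have "x \<in> generate G {a 1, a 2, a 3}" "y \<in> generate G {a 1, a 2, a 3}"
        unfolding carrier_subgroup_generated using A3 by (simp_all add: Int_absorb1)
      then show "x \<otimes>\<^bsub>subgroup_generated G {a 1, a 2, a 3}\<^esub> y =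
                 y \<otimes>\<^bsub>subgroup_generated G {a 1, a 2, a 3}\<^esub> x"
        using comm_gen2[OF A3 pc3] unfolding subgroup_generated_def by simp
    qed
    have k14: "commutator G (a 1) (a 4) \<noteq> \<one>" using n14 comm_one_iff a1 a4 by blast
    have "cutoff_point G 4 a 3"
      unfolding cutoff_point_def Let_def
    proof (intro conjI ballI)
      show "3 \<in> {s \<in> {2..4}. \<forall>j\<in>{2..s}. commutator G (a 1) (a j) = \<one>}" using j23 by simp
      fix s assume s: "s \<in> {s \<in> {2..4::nat}. \<forall>j\<in>{2..s}. commutator G (a 1) (a j) = \<one>}"
      show "s \<le> 3"
      proof (rule ccontr)
        assume "\<not> s \<le> 3"
        then have "s = 4" using s by auto
        then show False using s k14 by auto
      qed
    qed
    then show ?thesis using cg by blast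
  qed
  show ?thesis using notc2 part2 by blast
qed

theorem mainTheorem9:
  fixes G :: "('a, 'b) monoid_scheme" and H :: "'a set" and f :: "'a \<Rightarrow> 'a"
    and p :: enat and a :: "nat \<Rightarrow> 'a"
  assumes "SSP_group G H f p"
    and "SSP_length G p = 4"
    and "canonical_basis G H f 4 a"
  shows "\<not> cutoff_point G 4 a 2 \<and>
         (\<not> comm_group G \<longrightarrow>
            comm_group (subgroup_generated G {a 1, a 2, a 3}) \<and> cutoff_point G 4 a 3)"
proof -
  have "group G" using assms(1) unfolding SSP_group_def by blast
  then show ?thesis using group.core[OF _ assms(1) assms(3)] by blast
qed

end
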